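(* Let $X$ and $Y$ be independent nonnegative random variables with distributions $F$ and $G$, where $G$ is not the point mass at $0$, and let $H$ be the distribution of $XY$. If $F\in\mathcal S$ and $H\in\mathcal L$, then $H\in\mathcal S$.
   Context: For a distribution $V$, $\overline V=1-V$ denotes its tail. All limits are as $x\to\infty$, and $f(x)\sim g(x)$ means $f(x)/g(x)\to1$. A distribution $V$ is long-tailed, written $V\in\mathcal L$, if $\overline V(x)>0$ for all $x$ and $\overline V(x-t)\sim\overline V(x)$ for every real $t$. A distribution $V$ on $[0,\infty)$ is subexponential, written $V\in\mathcal S$, if $\overline V(x)>0$ for all $x$ and $\overline{V*V}(x)\sim 2\overline V(x)$, where $V*V$ is the distribution of the sum of two independent copies of a random variable with distribution $V$. *)

theory Defs
  imports "HOL-Probability.Probability" "HOL-Library.Landau_Symbols"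
begin

definition tail :: "real measure \<Rightarrow> real \<Rightarrow> real" where
  "tail V x = 1 - measure V {..x}"

definition long_tailed :: "real measure \<Rightarrow> bool" where
  "long_tailed V \<longleftrightarrow> real_distribution V \<and> (\<forall>x. tail V x > 0) \<and>
     (\<forall>t::real. (\<lambda>x. tail V (x - t)) \<sim>[at_top] (\<lambda>x. tail V x))"

definition subexponential :: "real measure \<Rightarrow> bool" where
  "subexponential V \<longleftrightarrow> real_distribution V \<and> measure V {..<0} = 0 \<and> (\<forall>x. tail V x > 0) \<and>
     (\<lambda>x. tail (V \<star> V) x) \<sim>[at_top] (\<lambda>x. 2 * tail V x)"

end

theory Submission
  imports Defs
begin

definition Phi :: "real \<Rightarrow> real \<Rightarrow> (real \<times> real) set" where
  "Phi t s = {p. s < fst p \<and> s < snd p \<and> t < fst p + snd p}"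

context
  fixes F :: "real measure"
  assumes probF: "prob_space F" and setsF[measurable_cong]: "sets F = sets borel"
begin

lemma spaceF: "space F = UNIV"
  using sets_eq_imp_space_eq[OF setsF] by simp

lemma spaceFF: "space (F \<Otimes>\<^sub>M F) = UNIV"
  by (simp add: space_pair_measure spaceF)

lemma probFF: "prob_space (F \<Otimes>\<^sub>M F)"
  using probF by (simp add: prob_space_pair)

lemma setFF:
  assumes "{p \<in> space (F \<Otimes>\<^sub>M F). P p} \<in> sets (F \<Otimes>\<^sub>M F)"
  shows "{p. P p} \<in> sets (F \<Otimes>\<^sub>M F)"
  using assms by (simp add: spaceFF)

lemma measure_times:
  assumes "A \<in> sets borel" "B \<in> sets borel"
  shows "measure (F \<Otimes>\<^sub>M F) (A \<times> B) = measure F A * measure F B"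
proof -
  interpret F: prob_space F by (rule probF)
  have "emeasure (F \<Otimes>\<^sub>M F) (A \<times> B) = emeasure F A * emeasure F B"
    using assms by (intro F.emeasure_pair_measure_Times) (auto simp: setsF)
  then show ?thesis
    by (simp add: measure_def enn2real_mult)
qed

lemma Phi_sets: "Phi t s \<in> sets (F \<Otimes>\<^sub>M F)"
proof -
  have "{p \<in> space (F \<Otimes>\<^sub>M F). s < fst p \<and> s < snd p \<and> t < fst p + snd p} \<in> sets (F \<Otimes>\<^sub>M F)"
    by measurable
  then show ?thesis unfolding Phi_def by (simp add: spaceFF)
qed

lemma Phi_sets': "Phi t s \<in> sets (borel \<Otimes>\<^sub>M borel)"
  using Phi_sets sets_pair_measure_cong[OF setsF setsF] by simp

lemma Sum_sets: "{p. t < fst p + snd p} \<in> sets (F \<Otimes>\<^sub>M F)"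
proof -
  have "{p \<in> space (F \<Otimes>\<^sub>M F). t < fst p + snd p} \<in> sets (F \<Otimes>\<^sub>M F)"
    by measurable
  then show ?thesis by (simp add: spaceFF)
qed

lemma Sum_sets': "{p. (t::real) < fst p + snd p} \<in> sets (borel \<Otimes>\<^sub>M borel)"
  using Sum_sets[of t] unfolding sets_pair_measure_cong[OF setsF setsF] .


end


context
  fixes F :: "real measure"
  assumes probF: "prob_space F" and setsF[measurable_cong]: "sets F = sets borel"
    and Fnn: "measure F {..<0} = 0"
    and Fpos: "\<And>t. 0 < measure F {t<..}"
    and Fsub: "(\<lambda>t. measure (F \<Otimes>\<^sub>M F) {p. t < fst p + snd p}) \<sim>[at_top] (\<lambda>t. 2 * measure F {t<..})"
begin

interpretation F: prob_space F by (rule probF)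
interpretation FF: prob_space "F \<Otimes>\<^sub>M F" by (rule probFF[OF probF setsF])
interpretation Fr: real_distribution F by (simp add: real_distribution_def real_distribution_axioms_def probF setsF)

lemma T_mono: "s \<le> t \<Longrightarrow> measure F {t<..} \<le> measure F {s<..}"
  by (intro F.finite_measure_mono) (auto simp: setsF)

lemma T_eq: "measure F {t<..} = 1 - measure F {..t}"
proof -
  have "measure F {t<..} = measure F (space F - {..t})"
    by (simp add: spaceF[OF probF setsF] Compl_eq_Diff_UNIV[symmetric])
  also have "\<dots> = 1 - measure F {..t}"
    by (rule F.prob_compl) (simp add: setsF)
  finally show ?thesis .
qed

lemma T_lim: "((\<lambda>t. measure F {t<..}) \<longlongrightarrow> 0) at_top"
proof -
  have "((\<lambda>t. 1 - cdf F t) \<longlongrightarrow> 1 - 1) at_top"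
    by (intro tendsto_intros Fr.cdf_lim_at_top_prob)
  then show ?thesis by (simp add: T_eq cdf_def)
qed

lemma T_le1: "measure F {t<..} \<le> 1"
  by (rule F.prob_le_1)

lemma F0s: assumes "0 \<le> s" shows "measure F {0..s} = 1 - measure F {s<..}"
proof -
  have "measure F {..s} = measure F ({..<0} \<union> {0..s})"
    using assms by (intro arg_cong[where f="measure F"]) auto
  also have "\<dots> = measure F {..<0} + measure F {0..s}"
    by (intro F.finite_measure_Union) (auto simp: setsF)
  finally show ?thesis using Fnn T_eq[of s] by simp
qed

lemma S_le:
  assumes "c > 1"
  shows "\<exists>t0. \<forall>t\<ge>t0. measure (F \<Otimes>\<^sub>M F) {p. t < fst p + snd p} \<le> c * 2 * measure F {t<..}"
proof -
  have "eventually (\<lambda>t. norm (measure (F \<Otimes>\<^sub>M F) {p. t < fst p + snd p}) \<le> c * norm (2 * measure F {t<..})) at_top"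
    by (rule asymp_equiv_imp_eventually_le[OF Fsub assms])
  then obtain t0 where "\<forall>t\<ge>t0. norm (measure (F \<Otimes>\<^sub>M F) {p. t < fst p + snd p}) \<le> c * norm (2 * measure F {t<..})"
    by (auto simp: eventually_at_top_linorder)
  then show ?thesis by (intro exI[of _ t0]) auto
qed




lemma F1:
  assumes e: "e > 0"
  shows "\<exists>s0>0. \<forall>s\<ge>s0. \<forall>t. measure (F \<Otimes>\<^sub>M F) (Phi t s) \<le> e * measure F {t<..}"
proof -
  define T where "T t = measure F {t<..}" for t
  define S where "S t = measure (F \<Otimes>\<^sub>M F) {p. t < fst p + snd p}" for t
  define e' where "e' = e / 3"
  have e': "e' > 0" using e by (simp add: e'_def)
  obtain te where te: "\<And>t. t \<ge> te \<Longrightarrow> S t \<le> (1 + e'/2) * 2 * T t"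
    using S_le[of "1 + e'/2"] e' unfolding S_def T_def by auto
  have Tte: "T te > 0" using Fpos by (simp add: T_def)
  have "eventually (\<lambda>s. T s < min e' (e' * T te)) at_top"
    using order_tendstoD(2)[OF T_lim, of "min e' (e' * T te)"] e' Tte by (simp add: T_def)
  then obtain s1 where s1: "\<And>s. s \<ge> s1 \<Longrightarrow> T s < min e' (e' * T te)"
    by (auto simp: eventually_at_top_linorder)
  define s0 where "s0 = max s1 1"
  have Tmono: "\<And>a b. a \<le> b \<Longrightarrow> T b \<le> T a" by (simp add: T_def T_mono)
  have Tnn: "\<And>a. 0 \<le> T a" by (simp add: T_def)
  have "\<forall>s\<ge>s0. \<forall>t. measure (F \<Otimes>\<^sub>M F) (Phi t s) \<le> e * T t"
  proof (intro allI impI)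
    fix s t assume ss0: "s \<ge> s0"
    have s0: "s \<ge> s1" "s \<ge> 1" using ss0 by (auto simp: s0_def)
    have Ts: "T s < e'" "T s < e' * T te" using s1[OF s0(1)] by auto
    have sub1: "Phi t s \<subseteq> {s<..} \<times> {s<..}" by (auto simp: Phi_def)
    have P1: "measure (F \<Otimes>\<^sub>M F) (Phi t s) \<le> T s * T s"
    proof -
      have "measure (F \<Otimes>\<^sub>M F) (Phi t s) \<le> measure (F \<Otimes>\<^sub>M F) ({s<..} \<times> {s<..})"
        by (intro FF.finite_measure_mono sub1) (simp add: setsF)
      also have "\<dots> = T s * T s" by (simp add: measure_times[OF probF setsF] T_def)
      finally show ?thesis .
    qed
    have P2: "T s * T s \<le> T s" using Tnn[of s] T_le1[of s] unfolding T_def by (simp add: mult_left_le)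
    show "measure (F \<Otimes>\<^sub>M F) (Phi t s) \<le> e * T t"
    proof (cases "t \<le> s")
      case True
      have "T s * T s \<le> e' * T s" using Ts Tnn[of s] by (intro mult_right_mono) auto
      also have "\<dots> \<le> e' * T t" using Tmono[OF True] e' by simp
      also have "\<dots> \<le> e * T t" using e Tnn[of t] by (simp add: e'_def)
      finally show ?thesis using P1 by simp
    next
      case False
      show ?thesis
      proof (cases "t < te")
        case True
        have "T s \<le> e' * T te" using Ts by simp
        also have "\<dots> \<le> e' * T t" using Tmono[of t te] True e' by simp
        also have "\<dots> \<le> e * T t" using e Tnn[of t] by (simp add: e'_def)
        finally show ?thesis using P1 P2 by simp
      next
        case tte: False
        have st: "s < t" using False by simp
        define A1 where "A1 = {0..s} \<times> {t<..}"
        define A2 where "A2 = {t<..} \<times> {0..s}"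
        have mA1: "measure (F \<Otimes>\<^sub>M F) A1 = (1 - T s) * T t"
          using s0 by (simp add: A1_def measure_times[OF probF setsF] F0s T_def)
        have mA2: "measure (F \<Otimes>\<^sub>M F) A2 = (1 - T s) * T t"
          using s0 by (simp add: A2_def measure_times[OF probF setsF] F0s T_def)
        have disj: "(A1 \<union> A2) \<inter> Phi t s = {}" using st s0 by (auto simp: A1_def A2_def Phi_def)
        have "measure (F \<Otimes>\<^sub>M F) (A1 \<union> A2 \<union> Phi t s) = measure (F \<Otimes>\<^sub>M F) (A1 \<union> A2) + measure (F \<Otimes>\<^sub>M F) (Phi t s)"
          using st s0 disj by (intro FF.finite_measure_Union) (auto simp: A1_def A2_def setsF Phi_sets'[OF probF setsF])
        also have "measure (F \<Otimes>\<^sub>M F) (A1 \<union> A2) = measure (F \<Otimes>\<^sub>M F) A1 + measure (F \<Otimes>\<^sub>M F) A2"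
          using st by (intro FF.finite_measure_Union) (auto simp: A1_def A2_def setsF)
        finally have eq: "measure (F \<Otimes>\<^sub>M F) (A1 \<union> A2 \<union> Phi t s) = 2 * (1 - T s) * T t + measure (F \<Otimes>\<^sub>M F) (Phi t s)"
          using mA1 mA2 by simp
        have "measure (F \<Otimes>\<^sub>M F) (A1 \<union> A2 \<union> Phi t s) \<le> S t"
          unfolding S_def using s0 by (intro FF.finite_measure_mono) (auto simp: A1_def A2_def Phi_def Sum_sets'[OF probF setsF])
        also have "\<dots> \<le> (1 + e'/2) * 2 * T t" using te tte by simp
        finally have "measure (F \<Otimes>\<^sub>M F) (Phi t s) \<le> (1 + e'/2) * 2 * T t - 2 * (1 - T s) * T t"
          using eq by simp
        also have "\<dots> = (e' + 2 * T s) * T t" by (simp add: algebra_simps)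
        also have "\<dots> \<le> (e' + 2 * e') * T t" using Ts Tnn[of t] by (intro mult_right_mono) auto
        also have "\<dots> = e * T t" by (simp add: e'_def)
        finally show ?thesis .
      qed
    qed
  qed
  then show ?thesis using s0_def by (intro exI[of _ s0]) (auto simp: T_def)
qed

lemma C0: "\<exists>C>0. \<forall>t. measure (F \<Otimes>\<^sub>M F) {p. t < fst p + snd p} \<le> C * measure F {t<..}"
proof -
  obtain t1 where t1: "\<And>t. t \<ge> t1 \<Longrightarrow> measure (F \<Otimes>\<^sub>M F) {p. t < fst p + snd p} \<le> (3/2) * 2 * measure F {t<..}"
    using S_le[of "3/2"] by auto
  define C where "C = max 3 (1 / measure F {t1<..})"
  have pos: "measure F {t1<..} > 0" by (rule Fpos)
  have "\<forall>t. measure (F \<Otimes>\<^sub>M F) {p. t < fst p + snd p} \<le> C * measure F {t<..}"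
  proof
    fix t
    show "measure (F \<Otimes>\<^sub>M F) {p. t < fst p + snd p} \<le> C * measure F {t<..}"
    proof (cases "t \<ge> t1")
      case True
      then have "measure (F \<Otimes>\<^sub>M F) {p. t < fst p + snd p} \<le> 3 * measure F {t<..}" using t1 by simp
      also have "\<dots> \<le> C * measure F {t<..}" by (intro mult_right_mono) (auto simp: C_def)
      finally show ?thesis .
    next
      case False
      have "measure (F \<Otimes>\<^sub>M F) {p. t < fst p + snd p} \<le> 1" by (rule FF.prob_le_1)
      also have "1 = (1 / measure F {t1<..}) * measure F {t1<..}" using pos by simp
      also have "\<dots> \<le> C * measure F {t<..}"
        using False pos by (intro mult_mono) (auto simp: C_def T_mono)
      finally show ?thesis .
    qed
  qed
  then show ?thesis by (intro exI[of _ C]) (auto simp: C_def)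
qed

end

definition Hf :: "real measure \<Rightarrow> real \<Rightarrow> real \<Rightarrow> ennreal" where
  "Hf F c y = emeasure F {u. 0 \<le> u \<and> c < u * y}"

definition Eset :: "real \<Rightarrow> real \<Rightarrow> real \<Rightarrow> real \<Rightarrow> (real \<times> real) set" where
  "Eset h x y1 y2 = {p. 0 \<le> fst p \<and> 0 \<le> snd p \<and> x < fst p * y1 + snd p * y2 \<and> h < fst p * y1 \<and> h < snd p * y2}"

context
  fixes F :: "real measure" and e C L Ls s0 s h :: real
  assumes probF: "prob_space F" and setsF[measurable_cong]: "sets F = sets borel"
    and par: "0 < e" "0 < C" "0 < L" "L \<le> Ls" "0 < s0" "s0 \<le> s" "0 < h" "s * L \<le> h" "s0 * Ls \<le> h"
    and F1i: "\<And>t. measure (F \<Otimes>\<^sub>M F) (Phi t s0) \<le> e * measure F {t<..}"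
    and C0i: "\<And>t. measure (F \<Otimes>\<^sub>M F) {p. t < fst p + snd p} \<le> C * measure F {t<..}"
begin

interpretation F: prob_space F by (rule probF)
interpretation FF: prob_space "F \<Otimes>\<^sub>M F" by (rule probFF[OF probF setsF])

lemma sF: "space F = UNIV" by (rule spaceF[OF probF setsF])
lemma sFF: "space (F \<Otimes>\<^sub>M F) = UNIV" by (rule spaceFF[OF probF setsF])

lemma Eset_sets: "Eset h' x y1 y2 \<in> sets (F \<Otimes>\<^sub>M F)"
proof -
  have "{p \<in> space (F \<Otimes>\<^sub>M F). 0 \<le> fst p \<and> 0 \<le> snd p \<and> x < fst p * y1 + snd p * y2 \<and> h' < fst p * y1 \<and> h' < snd p * y2} \<in> sets (F \<Otimes>\<^sub>M F)"
    by measurable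
  then show ?thesis by (simp add: sFF Eset_def)
qed

lemma F1e: "emeasure (F \<Otimes>\<^sub>M F) (Phi t s0) \<le> ennreal e * emeasure F {t<..}"
proof -
  have "emeasure (F \<Otimes>\<^sub>M F) (Phi t s0) = ennreal (measure (F \<Otimes>\<^sub>M F) (Phi t s0))"
    by (simp add: FF.emeasure_eq_measure)
  also have "\<dots> \<le> ennreal (e * measure F {t<..})" by (intro ennreal_leI F1i)
  also have "\<dots> = ennreal e * emeasure F {t<..}"
    using par by (simp add: F.emeasure_eq_measure ennreal_mult)
  finally show ?thesis .
qed

lemma C0e: "emeasure (F \<Otimes>\<^sub>M F) {p. t < fst p + snd p} \<le> ennreal C * emeasure F {t<..}"
proof -
  have "emeasure (F \<Otimes>\<^sub>M F) {p. t < fst p + snd p} = ennreal (measure (F \<Otimes>\<^sub>M F) {p. t < fst p + snd p})"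
    by (simp add: FF.emeasure_eq_measure)
  also have "\<dots> \<le> ennreal (C * measure F {t<..})" by (intro ennreal_leI C0i)
  also have "\<dots> = ennreal C * emeasure F {t<..}"
    using par by (simp add: F.emeasure_eq_measure ennreal_mult)
  finally show ?thesis .
qed

lemma T_le_Hf: assumes "0 < x" "0 < m" shows "emeasure F {x/m<..} \<le> Hf F x m"
  unfolding Hf_def
proof (intro emeasure_mono)
  show "{x / m<..} \<subseteq> {u. 0 \<le> u \<and> x < u * m}"
  proof
    fix u assume "u \<in> {x/m<..}"
    then have "x / m < u" by simp
    then have "x < u * m" using assms by (simp add: pos_divide_less_eq)
    moreover have "0 \<le> u" using \<open>x / m < u\<close> assms by (smt (verit) divide_pos_pos)
    ultimately show "u \<in> {u. 0 \<le> u \<and> x < u * m}" by simp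
  qed
  have "{u \<in> space F. 0 \<le> u \<and> x < u * m} \<in> sets F" by measurable
  then show "{u. 0 \<le> u \<and> x < u * m} \<in> sets F" by (simp add: sF)
qed

lemma Hf_max: "Hf F x (max y1 y2) \<le> Hf F x y1 + Hf F x y2"
  by (cases "y1 \<le> y2") (auto simp: max_def add_increasing add_increasing2)

lemma E_case1:
  assumes y: "0 \<le> y1" "0 \<le> y2" "y1 \<le> Ls" "y2 \<le> Ls" and x: "0 < x"
  shows "emeasure (F \<Otimes>\<^sub>M F) (Eset h x y1 y2) \<le> ennreal e * (Hf F x y1 + Hf F x y2)"
proof (cases "max y1 y2 = 0")
  case True
  then have "y1 = 0" "y2 = 0" using y by (auto simp: max_def split: if_splits)
  then have "Eset h x y1 y2 = {}" using par by (auto simp: Eset_def)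
  then show ?thesis by simp
next
  case False
  define m where "m = max y1 y2"
  have m: "0 < m" using False y by (auto simp: m_def max_def)
  have sub: "Eset h x y1 y2 \<subseteq> Phi (x/m) s0"
  proof
    fix p assume "p \<in> Eset h x y1 y2"
    then obtain a b where p: "p = (a, b)" "0 \<le> a" "0 \<le> b" "x < a * y1 + b * y2" "h < a * y1" "h < b * y2"
      by (cases p) (auto simp: Eset_def)
    have "s0 * y1 \<le> s0 * Ls" using par y by (intro mult_left_mono) auto
    then have "s0 * y1 < a * y1" using p par by linarith
    then have a: "s0 < a" using y by (simp add: mult_less_cancel_right)
    have "s0 * y2 \<le> s0 * Ls" using par y by (intro mult_left_mono) auto
    then have "s0 * y2 < b * y2" using p par by linarith
    then have b: "s0 < b" using y by (simp add: mult_less_cancel_right)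
    have "a * y1 \<le> a * m" "b * y2 \<le> b * m" using p by (auto simp: m_def intro!: mult_left_mono)
    then have "x < (a + b) * m" using p by (simp add: algebra_simps)
    then have "x / m < a + b" using m by (simp add: pos_divide_less_eq)
    then show "p \<in> Phi (x/m) s0" using a b p by (simp add: Phi_def)
  qed
  have "emeasure (F \<Otimes>\<^sub>M F) (Eset h x y1 y2) \<le> emeasure (F \<Otimes>\<^sub>M F) (Phi (x/m) s0)"
    by (intro emeasure_mono sub) (rule Phi_sets[OF probF setsF])
  also have "\<dots> \<le> ennreal e * emeasure F {x/m<..}" by (rule F1e)
  also have "\<dots> \<le> ennreal e * Hf F x m" by (intro mult_left_mono T_le_Hf x m) auto
  also have "\<dots> \<le> ennreal e * (Hf F x y1 + Hf F x y2)" unfolding m_def by (intro mult_left_mono Hf_max) auto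
  finally show ?thesis .
qed

lemma E_case2:
  assumes y: "L < y1" "L < y2" and x: "0 < x"
  shows "emeasure (F \<Otimes>\<^sub>M F) (Eset h x y1 y2) \<le> ennreal C * (Hf F x y1 + Hf F x y2)"
proof -
  define m where "m = max y1 y2"
  have m: "0 < m" using y par by (auto simp: m_def max_def)
  have sub: "Eset h x y1 y2 \<subseteq> {p. x/m < fst p + snd p}"
  proof
    fix p assume "p \<in> Eset h x y1 y2"
    then obtain a b where p: "p = (a, b)" "0 \<le> a" "0 \<le> b" "x < a * y1 + b * y2"
      by (cases p) (auto simp: Eset_def)
    have "a * y1 \<le> a * m" "b * y2 \<le> b * m" using p by (auto simp: m_def intro!: mult_left_mono)
    then have "x < (a + b) * m" using p by (simp add: algebra_simps)
    then have "x / m < a + b" using m by (simp add: pos_divide_less_eq)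
    then show "p \<in> {p. x/m < fst p + snd p}" using p by simp
  qed
  have "emeasure (F \<Otimes>\<^sub>M F) (Eset h x y1 y2) \<le> emeasure (F \<Otimes>\<^sub>M F) {p. x/m < fst p + snd p}"
    by (intro emeasure_mono sub) (rule Sum_sets[OF probF setsF])
  also have "\<dots> \<le> ennreal C * emeasure F {x/m<..}" by (rule C0e)
  also have "\<dots> \<le> ennreal C * Hf F x m" by (intro mult_left_mono T_le_Hf x m) auto
  also have "\<dots> \<le> ennreal C * (Hf F x y1 + Hf F x y2)" unfolding m_def by (intro mult_left_mono Hf_max) auto
  finally show ?thesis .
qed

lemma cyl2: "B \<in> sets borel \<Longrightarrow> emeasure (F \<Otimes>\<^sub>M F) (UNIV \<times> B) = emeasure F B"
proof -
  assume B: "B \<in> sets borel"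
  have "emeasure (F \<Otimes>\<^sub>M F) (UNIV \<times> B) = emeasure F UNIV * emeasure F B"
    using B by (intro F.emeasure_pair_measure_Times) (auto simp: setsF)
  also have "emeasure F UNIV = 1" using F.emeasure_space_1 by (simp add: sF)
  finally show ?thesis by simp
qed

lemma E_case3:
  assumes y: "Ls < y1" "0 \<le> y2" "y2 \<le> L" and x: "0 < x"
  shows "emeasure (F \<Otimes>\<^sub>M F) (Eset h x y1 y2) \<le>
     emeasure F {u. 0 \<le> u \<and> x < 2 * L * u} + ennreal e * Hf F x y1 + (if x < 2 * s0 * y1 then emeasure F {s<..} else 0)"
proof -
  have y1: "0 < y1" using y par by linarith
  define P where "P = (if s0 \<le> x / (2 * y1) then Phi (x / y1) s0 else {})"
  define Q where "Q = (if x < 2 * s0 * y1 then UNIV \<times> {s<..} else ({}::(real\<times>real) set))"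
  define B where "B = {u::real. 0 \<le> u \<and> x < 2 * L * u}"
  have Bs: "B \<in> sets borel"
  proof -
    have "{u \<in> space borel. 0 \<le> u \<and> x < 2 * L * u} \<in> sets borel" by measurable
    then show ?thesis by (simp add: B_def)
  qed
  have sub: "Eset h x y1 y2 \<subseteq> (UNIV \<times> B) \<union> P \<union> Q"
  proof
    fix p assume "p \<in> Eset h x y1 y2"
    then obtain a b where p: "p = (a, b)" "0 \<le> a" "0 \<le> b" "x < a * y1 + b * y2" "h < a * y1" "h < b * y2"
      by (cases p) (auto simp: Eset_def)
    have "b * y2 \<le> b * L" using p y by (intro mult_left_mono) auto
    then have "s * L < b * L" using p par by linarith
    then have bs: "s < b" using par by (simp add: mult_less_cancel_right)
    show "p \<in> (UNIV \<times> B) \<union> P \<union> Q"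
    proof (cases "a * y1 \<le> x / 2")
      case True
      then have "x < 2 * L * b" using p \<open>b * y2 \<le> b * L\<close> by (simp add: algebra_simps)
      then show ?thesis using p by (simp add: B_def)
    next
      case False
      have "b * y2 \<le> b * y1" using p y par by (intro mult_left_mono) auto
      then have "x < (a + b) * y1" using p by (simp add: algebra_simps)
      then have ab: "x / y1 < a + b" using y1 by (simp add: pos_divide_less_eq)
      have "x / 2 < a * y1" using False by simp
      then have ax: "x / (2 * y1) < a" using y1 by (simp add: divide_less_eq mult.commute)
      show ?thesis
      proof (cases "s0 \<le> x / (2 * y1)")
        case True
        then have "p \<in> P" using ax ab bs par p by (simp add: P_def Phi_def)
        then show ?thesis by simp
      next
        case False
        then have "x / (2 * y1) < s0" by simp
        then have "x < s0 * (2 * y1)" using y1 by (simp add: divide_less_eq)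
        then have "x < 2 * s0 * y1" by (simp add: algebra_simps)
        then have "p \<in> Q" using bs p by (simp add: Q_def)
        then show ?thesis by simp
      qed
    qed
  qed
  have Ps: "P \<in> sets (F \<Otimes>\<^sub>M F)" by (simp add: P_def Phi_sets[OF probF setsF])
  have Qs: "Q \<in> sets (F \<Otimes>\<^sub>M F)" by (simp add: Q_def setsF)
  have UBs: "UNIV \<times> B \<in> sets (F \<Otimes>\<^sub>M F)" using Bs by (simp add: setsF)
  have "emeasure (F \<Otimes>\<^sub>M F) (Eset h x y1 y2) \<le> emeasure (F \<Otimes>\<^sub>M F) ((UNIV \<times> B) \<union> P \<union> Q)"
    by (intro emeasure_mono sub sets.Un Ps Qs UBs)
  also have "\<dots> \<le> emeasure (F \<Otimes>\<^sub>M F) ((UNIV \<times> B) \<union> P) + emeasure (F \<Otimes>\<^sub>M F) Q"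
    by (intro emeasure_subadditive sets.Un Ps Qs UBs)
  also have "\<dots> \<le> emeasure (F \<Otimes>\<^sub>M F) (UNIV \<times> B) + emeasure (F \<Otimes>\<^sub>M F) P + emeasure (F \<Otimes>\<^sub>M F) Q"
    by (intro add_right_mono emeasure_subadditive sets.Un Ps Qs UBs)
  also have "emeasure (F \<Otimes>\<^sub>M F) (UNIV \<times> B) = emeasure F B" by (rule cyl2[OF Bs])
  also have "emeasure (F \<Otimes>\<^sub>M F) P \<le> ennreal e * Hf F x y1"
  proof (cases "s0 \<le> x / (2 * y1)")
    case True
    have "emeasure (F \<Otimes>\<^sub>M F) P \<le> ennreal e * emeasure F {x/y1<..}" using True by (simp add: P_def F1e)
    also have "\<dots> \<le> ennreal e * Hf F x y1" by (intro mult_left_mono T_le_Hf x y1) auto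
    finally show ?thesis .
  qed (simp add: P_def)
  also have "emeasure (F \<Otimes>\<^sub>M F) Q = (if x < 2 * s0 * y1 then emeasure F {s<..} else 0)"
    by (simp add: Q_def cyl2)
  finally show ?thesis by (simp add: B_def add_mono)
qed

lemma Eset_swap: "emeasure (F \<Otimes>\<^sub>M F) (Eset h' x y2 y1) = emeasure (F \<Otimes>\<^sub>M F) (Eset h' x y1 y2)"
proof -
  interpret pair_sigma_finite F F ..
  have "emeasure (F \<Otimes>\<^sub>M F) (Eset h' x y1 y2) = emeasure (distr (F \<Otimes>\<^sub>M F) (F \<Otimes>\<^sub>M F) (\<lambda>(x, y). (y, x))) (Eset h' x y1 y2)"
    by (subst distr_pair_swap) simp
  also have "\<dots> = emeasure (F \<Otimes>\<^sub>M F) ((\<lambda>(x, y). (y, x)) -` Eset h' x y1 y2 \<inter> space (F \<Otimes>\<^sub>M F))"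
    by (intro emeasure_distr Eset_sets) (simp add: measurable_pair_swap')
  also have "(\<lambda>(x, y). (y, x)) -` Eset h' x y1 y2 \<inter> space (F \<Otimes>\<^sub>M F) = Eset h' x y2 y1"
    by (auto simp: Eset_def sFF)
  finally show ?thesis by simp
qed

definition "Rb x y = (if Ls < y then emeasure F {u. 0 \<le> u \<and> x < 2 * L * u} + ennreal e * Hf F x y +
   (if x < 2 * s0 * y then emeasure F {s<..} else 0) else 0)"

definition "Eb x y1 y2 = ennreal e * Hf F x y1 + ennreal e * Hf F x y2 + (if L < y2 then ennreal C * Hf F x y1 else 0)
   + (if L < y1 then ennreal C * Hf F x y2 else 0) + Rb x y1 + Rb x y2"

lemma E_bound:
  assumes y: "0 \<le> y1" "0 \<le> y2" and x: "0 < x"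
  shows "emeasure (F \<Otimes>\<^sub>M F) (Eset h x y1 y2) \<le> Eb x y1 y2"
proof -
  consider "y1 \<le> Ls \<and> y2 \<le> Ls" | "L < y1 \<and> L < y2" | "Ls < y1 \<and> y2 \<le> L" | "Ls < y2 \<and> y1 \<le> L"
    using par by linarith
  then show ?thesis
  proof cases
    case 1
    then have "emeasure (F \<Otimes>\<^sub>M F) (Eset h x y1 y2) \<le> ennreal e * Hf F x y1 + ennreal e * Hf F x y2"
      using E_case1[of y1 y2 x] y x by (simp add: distrib_left)
    also have "\<dots> \<le> Eb x y1 y2" unfolding Eb_def by (simp add: ac_simps add_increasing2)
    finally show ?thesis .
  next
    case 2
    then have "emeasure (F \<Otimes>\<^sub>M F) (Eset h x y1 y2) \<le> (if L < y2 then ennreal C * Hf F x y1 else 0)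
   + (if L < y1 then ennreal C * Hf F x y2 else 0)"
      using E_case2[of y1 y2 x] y x by (simp add: distrib_left)
    also have "\<dots> \<le> Eb x y1 y2" unfolding Eb_def by (simp add: ac_simps add_increasing2)
    finally show ?thesis .
  next
    case 3
    then have "emeasure (F \<Otimes>\<^sub>M F) (Eset h x y1 y2) \<le> Rb x y1"
      using E_case3[of y1 y2 x] y x by (simp add: Rb_def)
    also have "\<dots> \<le> Eb x y1 y2" unfolding Eb_def by (simp add: ac_simps add_increasing2)
    finally show ?thesis .
  next
    case 4
    then have "emeasure (F \<Otimes>\<^sub>M F) (Eset h x y1 y2) \<le> Rb x y2"
      using E_case3[of y2 y1 x] y x Eset_swap[of h x y1 y2] by (simp add: Rb_def)
    also have "\<dots> \<le> Eb x y1 y2" unfolding Eb_def by (simp add: ac_simps add_increasing2)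
    finally show ?thesis .
  qed
qed

lemma Rb_le: "Rb x y \<le> ennreal e * Hf F x y + emeasure F {u. 0 \<le> u \<and> x < 2 * L * u} * indicator {Ls<..} y
   + emeasure F {s<..} * indicator {y. x < 2 * s0 * y} y"
  by (auto simp: Rb_def indicator_def ac_simps add_increasing2)

lemma Eb_le: "Hf F (x - h) y1 + Hf F (x - h) y2 + Eb x y1 y2 \<le>
   (Hf F (x - h) y1 + 2 * (ennreal e * Hf F x y1) + emeasure F {u. 0 \<le> u \<and> x < 2 * L * u} * indicator {Ls<..} y1
     + emeasure F {s<..} * indicator {y. x < 2 * s0 * y} y1)
 + (Hf F (x - h) y2 + 2 * (ennreal e * Hf F x y2) + emeasure F {u. 0 \<le> u \<and> x < 2 * L * u} * indicator {Ls<..} y2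
     + emeasure F {s<..} * indicator {y. x < 2 * s0 * y} y2)
 + (ennreal C * Hf F x y1) * indicator {L<..} y2 + (ennreal C * Hf F x y2) * indicator {L<..} y1"
proof -
  have i1: "(if L < y2 then ennreal C * Hf F x y1 else 0) = (ennreal C * Hf F x y1) * indicator {L<..} y2"
    by (simp add: indicator_def)
  have i2: "(if L < y1 then ennreal C * Hf F x y2 else 0) = (ennreal C * Hf F x y2) * indicator {L<..} y1"
    by (simp add: indicator_def)
  have a1: "Hf F (x - h) y1 + ennreal e * Hf F x y1 + Rb x y1 \<le> Hf F (x - h) y1 + 2 * (ennreal e * Hf F x y1) + emeasure F {u. 0 \<le> u \<and> x < 2 * L * u} * indicator {Ls<..} y1
     + emeasure F {s<..} * indicator {y. x < 2 * s0 * y} y1"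
  proof -
    have "Hf F (x - h) y1 + ennreal e * Hf F x y1 + Rb x y1 \<le> Hf F (x - h) y1 + ennreal e * Hf F x y1 + (ennreal e * Hf F x y1 + emeasure F {u. 0 \<le> u \<and> x < 2 * L * u} * indicator {Ls<..} y1
     + emeasure F {s<..} * indicator {y. x < 2 * s0 * y} y1)"
      by (intro add_left_mono Rb_le)
    also have "\<dots> = Hf F (x - h) y1 + 2 * (ennreal e * Hf F x y1) + emeasure F {u. 0 \<le> u \<and> x < 2 * L * u} * indicator {Ls<..} y1
     + emeasure F {s<..} * indicator {y. x < 2 * s0 * y} y1"
      by (simp only: mult_2 add.assoc)
    finally show ?thesis .
  qed
  have a2: "Hf F (x - h) y2 + ennreal e * Hf F x y2 + Rb x y2 \<le> Hf F (x - h) y2 + 2 * (ennreal e * Hf F x y2) + emeasure F {u. 0 \<le> u \<and> x < 2 * L * u} * indicator {Ls<..} y2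
     + emeasure F {s<..} * indicator {y. x < 2 * s0 * y} y2"
  proof -
    have "Hf F (x - h) y2 + ennreal e * Hf F x y2 + Rb x y2 \<le> Hf F (x - h) y2 + ennreal e * Hf F x y2 + (ennreal e * Hf F x y2 + emeasure F {u. 0 \<le> u \<and> x < 2 * L * u} * indicator {Ls<..} y2
     + emeasure F {s<..} * indicator {y. x < 2 * s0 * y} y2)"
      by (intro add_left_mono Rb_le)
    also have "\<dots> = Hf F (x - h) y2 + 2 * (ennreal e * Hf F x y2) + emeasure F {u. 0 \<le> u \<and> x < 2 * L * u} * indicator {Ls<..} y2
     + emeasure F {s<..} * indicator {y. x < 2 * s0 * y} y2"
      by (simp only: mult_2 add.assoc)
    finally show ?thesis .
  qed
  have eq: "Hf F (x - h) y1 + Hf F (x - h) y2 + Eb x y1 y2 =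
     (Hf F (x - h) y1 + ennreal e * Hf F x y1 + Rb x y1) + (Hf F (x - h) y2 + ennreal e * Hf F x y2 + Rb x y2)
     + (ennreal C * Hf F x y1) * indicator {L<..} y2 + (ennreal C * Hf F x y2) * indicator {L<..} y1"
    unfolding Eb_def i1[symmetric] i2[symmetric] by (simp add: ac_simps)
  show ?thesis by (subst eq) (intro add_mono a1 a2 order_refl)
qed

end

lemma int2:
  assumes G: "prob_space G" and [measurable]: "P \<in> borel_measurable G" "Q \<in> borel_measurable G" "I \<in> borel_measurable G"
  shows "(\<integral>\<^sup>+y1. \<integral>\<^sup>+y2. (P y1 + P y2 + Q y1 * I y2 + Q y2 * I y1) \<partial>G \<partial>G)
     = 2 * integral\<^sup>N G P + 2 * (integral\<^sup>N G Q * integral\<^sup>N G I)"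
proof -
  interpret G: prob_space G by (rule G)
  have inner: "(\<integral>\<^sup>+y2. (P y1 + P y2 + Q y1 * I y2 + Q y2 * I y1) \<partial>G)
     = P y1 + integral\<^sup>N G P + Q y1 * integral\<^sup>N G I + integral\<^sup>N G Q * I y1" for y1
    by (simp add: nn_integral_add nn_integral_cmult nn_integral_multc G.emeasure_space_1)
  have "(\<integral>\<^sup>+y1. \<integral>\<^sup>+y2. (P y1 + P y2 + Q y1 * I y2 + Q y2 * I y1) \<partial>G \<partial>G)
     = (\<integral>\<^sup>+y1. (P y1 + integral\<^sup>N G P + Q y1 * integral\<^sup>N G I + integral\<^sup>N G Q * I y1) \<partial>G)"
    by (simp add: inner)
  also have "\<dots> = integral\<^sup>N G P + integral\<^sup>N G P + integral\<^sup>N G Q * integral\<^sup>N G I + integral\<^sup>N G Q * integral\<^sup>N G I"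
    by (simp add: nn_integral_add nn_integral_cmult nn_integral_multc G.emeasure_space_1)
  also have "\<dots> = 2 * integral\<^sup>N G P + 2 * (integral\<^sup>N G Q * integral\<^sup>N G I)"
    by (simp add: mult_2)
  finally show ?thesis .
qed

definition Sset :: "real \<Rightarrow> real \<Rightarrow> real \<Rightarrow> (real \<times> real) set" where
  "Sset x y1 y2 = {p. 0 \<le> fst p \<and> 0 \<le> snd p \<and> x < fst p * y1 + snd p * y2}"

context
  fixes F G :: "real measure"
  assumes probF: "prob_space F" and setsF[measurable_cong]: "sets F = sets borel"
    and setsG[measurable_cong]: "sets G = sets borel"
begin

interpretation F: prob_space F by (rule probF)

lemma Hf_meas[measurable]: "(\<lambda>y. Hf F c y) \<in> borel_measurable G"
  unfolding Hf_def
proof (rule F.measurable_emeasure)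
  show "\<And>y. y \<in> space G \<Longrightarrow> {u. 0 \<le> u \<and> c < u * y} \<subseteq> space F" by (simp add: spaceF[OF probF setsF])
  have "{y \<in> space (G \<Otimes>\<^sub>M F). 0 \<le> snd y \<and> c < snd y * fst y} \<in> sets (G \<Otimes>\<^sub>M F)" by measurable
  then show "{y \<in> space (G \<Otimes>\<^sub>M F). snd y \<in> {u. 0 \<le> u \<and> c < u * fst y}} \<in> sets (G \<Otimes>\<^sub>M F)" by simp
qed

end

context
  fixes F G :: "real measure" and e C L Ls s0 s h :: real
  assumes probF: "prob_space F" and setsF[measurable_cong]: "sets F = sets borel"
    and probG: "prob_space G" and setsG[measurable_cong]: "sets G = sets borel"
    and Gnn: "AE y in G. 0 \<le> y"
    and par: "0 < e" "0 < C" "0 < L" "L \<le> Ls" "0 < s0" "s0 \<le> s" "0 < h" "s * L \<le> h" "s0 * Ls \<le> h"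
    and F1i: "\<And>t. measure (F \<Otimes>\<^sub>M F) (Phi t s0) \<le> e * measure F {t<..}"
    and C0i: "\<And>t. measure (F \<Otimes>\<^sub>M F) {p. t < fst p + snd p} \<le> C * measure F {t<..}"
    and qL: "ennreal C * emeasure G {L<..} \<le> ennreal e"
    and qLs: "emeasure G {Ls<..} \<le> ennreal e * emeasure G {2 * L<..}"
    and FTs: "emeasure F {s<..} \<le> ennreal e * emeasure F {2 * s0<..}"
begin

interpretation F: prob_space F by (rule probF)
interpretation G: prob_space G by (rule probG)
interpretation FF: prob_space "F \<Otimes>\<^sub>M F" by (rule probFF[OF probF setsF])

lemma sG: "space G = UNIV" using sets_eq_imp_space_eq[OF setsG] by simp

lemma cyl1: "B \<in> sets borel \<Longrightarrow> emeasure (F \<Otimes>\<^sub>M F) (B \<times> UNIV) = emeasure F B"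
proof -
  assume B: "B \<in> sets borel"
  have "emeasure (F \<Otimes>\<^sub>M F) (B \<times> UNIV) = emeasure F B * emeasure F UNIV"
    using B by (intro F.emeasure_pair_measure_Times) (auto simp: setsF)
  also have "emeasure F UNIV = 1" using F.emeasure_space_1 by (simp add: spaceF[OF probF setsF])
  finally show ?thesis by simp
qed

lemma Hset_borel: "{u::real. 0 \<le> u \<and> c < u * y} \<in> sets borel"
proof -
  have "{u \<in> space borel. 0 \<le> u \<and> c < u * y} \<in> sets borel" by measurable
  then show ?thesis by simp
qed

definition "HT c = (\<integral>\<^sup>+y. Hf F c y \<partial>G)"
definition "SS x = (\<integral>\<^sup>+y1. \<integral>\<^sup>+y2. emeasure (F \<Otimes>\<^sub>M F) (Sset x y1 y2) \<partial>G \<partial>G)"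

definition "Pf x y = Hf F (x - h) y + 2 * (ennreal e * Hf F x y)
   + emeasure F {u. 0 \<le> u \<and> x < 2 * L * u} * indicator {Ls<..} y + emeasure F {s<..} * indicator {y. x < 2 * s0 * y} y"

lemma S_point:
  assumes y: "0 \<le> y1" "0 \<le> y2" and x: "0 < x"
  shows "emeasure (F \<Otimes>\<^sub>M F) (Sset x y1 y2) \<le> Pf x y1 + Pf x y2
    + (ennreal C * Hf F x y1) * indicator {L<..} y2 + (ennreal C * Hf F x y2) * indicator {L<..} y1"
proof -
  define U1 where "U1 = {u. 0 \<le> u \<and> x - h < u * y1} \<times> (UNIV :: real set)"
  define U2 where "U2 = (UNIV :: real set) \<times> {u. 0 \<le> u \<and> x - h < u * y2}"
  have U1s: "U1 \<in> sets (F \<Otimes>\<^sub>M F)" using Hset_borel by (simp add: U1_def setsF)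
  have U2s: "U2 \<in> sets (F \<Otimes>\<^sub>M F)" using Hset_borel by (simp add: U2_def setsF)
  have Es: "Eset h x y1 y2 \<in> sets (F \<Otimes>\<^sub>M F)" by (rule Eset_sets[OF probF setsF par F1i C0i])
  have sub: "Sset x y1 y2 \<subseteq> U1 \<union> U2 \<union> Eset h x y1 y2"
    by (auto simp: Sset_def U1_def U2_def Eset_def)
  have "emeasure (F \<Otimes>\<^sub>M F) (Sset x y1 y2) \<le> emeasure (F \<Otimes>\<^sub>M F) (U1 \<union> U2 \<union> Eset h x y1 y2)"
    by (intro emeasure_mono sub sets.Un U1s U2s Es)
  also have "\<dots> \<le> emeasure (F \<Otimes>\<^sub>M F) (U1 \<union> U2) + emeasure (F \<Otimes>\<^sub>M F) (Eset h x y1 y2)"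
    by (intro emeasure_subadditive sets.Un U1s U2s Es)
  also have "\<dots> \<le> emeasure (F \<Otimes>\<^sub>M F) U1 + emeasure (F \<Otimes>\<^sub>M F) U2 + emeasure (F \<Otimes>\<^sub>M F) (Eset h x y1 y2)"
    by (intro add_right_mono emeasure_subadditive sets.Un U1s U2s Es)
  also have "emeasure (F \<Otimes>\<^sub>M F) U1 = Hf F (x - h) y1"
    unfolding U1_def Hf_def by (rule cyl1[OF Hset_borel])
  also have "emeasure (F \<Otimes>\<^sub>M F) U2 = Hf F (x - h) y2"
    unfolding U2_def Hf_def by (rule cyl2[OF probF setsF par F1i C0i Hset_borel])
  also have "emeasure (F \<Otimes>\<^sub>M F) (Eset h x y1 y2) \<le> Eb F e C L Ls s0 s x y1 y2"
    by (rule E_bound[OF probF setsF par F1i C0i y x])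
  also have "Hf F (x - h) y1 + Hf F (x - h) y2 + Eb F e C L Ls s0 s x y1 y2 \<le> Pf x y1 + Pf x y2
    + (ennreal C * Hf F x y1) * indicator {L<..} y2 + (ennreal C * Hf F x y2) * indicator {L<..} y1"
    unfolding Pf_def by (rule Eb_le[OF probF setsF par F1i C0i])
  finally show ?thesis by simp
qed

lemma Pf_meas[measurable]: "Pf x \<in> borel_measurable G"
proof -
  have [measurable]: "(\<lambda>y. Hf F c y) \<in> borel_measurable G" for c by (rule Hf_meas[OF probF setsF setsG])
  show ?thesis unfolding Pf_def by measurable
qed

lemma LB1:
  assumes a: "0 < a"
  shows "emeasure G {a<..} * emeasure F {u. 0 \<le> u \<and> x < a * u} \<le> HT x"
proof -
  have "emeasure G {a<..} * emeasure F {u. 0 \<le> u \<and> x < a * u} = (\<integral>\<^sup>+y. emeasure F {u. 0 \<le> u \<and> x < a * u} * indicator {a<..} y \<partial>G)"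
    by (subst nn_integral_cmult_indicator) (auto simp: setsG mult.commute)
  also have "\<dots> \<le> HT x" unfolding HT_def
  proof (intro nn_integral_mono)
    fix y
    show "emeasure F {u. 0 \<le> u \<and> x < a * u} * indicator {a<..} y \<le> Hf F x y"
    proof (cases "a < y")
      case True
      have "emeasure F {u. 0 \<le> u \<and> x < a * u} \<le> Hf F x y" unfolding Hf_def
      proof (intro emeasure_mono)
        show "{u. 0 \<le> u \<and> x < a * u} \<subseteq> {u. 0 \<le> u \<and> x < u * y}"
        proof safe
          fix u :: real assume u: "0 \<le> u" "x < a * u"
          have "u * a \<le> u * y" using u True by (intro mult_left_mono) auto
          then have "a * u \<le> u * y" by (simp add: mult.commute)
          then show "x < u * y" using u by linarith
        qed
        show "{u. 0 \<le> u \<and> x < u * y} \<in> sets F" using Hset_borel by (simp add: setsF)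
      qed
      then show ?thesis using True by simp
    qed simp
  qed
  finally show ?thesis .
qed

lemma LB2:
  assumes b: "0 < b" and x: "0 \<le> x"
  shows "emeasure G {y. x < b * y} * emeasure F {b<..} \<le> HT x"
proof -
  have Ss: "{y. x < b * y} \<in> sets G"
  proof -
    have "{y \<in> space G. x < b * y} \<in> sets G" by measurable
    then show ?thesis by (simp add: sG)
  qed
  have "emeasure G {y. x < b * y} * emeasure F {b<..} = (\<integral>\<^sup>+y. emeasure F {b<..} * indicator {y. x < b * y} y \<partial>G)"
    using Ss by (subst nn_integral_cmult_indicator) (auto simp: mult.commute)
  also have "\<dots> \<le> HT x" unfolding HT_def
  proof (intro nn_integral_mono)
    fix y
    show "emeasure F {b<..} * indicator {y. x < b * y} y \<le> Hf F x y"
    proof (cases "x < b * y")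
      case True
      have y: "0 < y" using True b x by (smt (verit) mult_nonpos_nonneg mult_nonneg_nonpos)
      have "emeasure F {b<..} \<le> Hf F x y" unfolding Hf_def
      proof (intro emeasure_mono)
        show "{b<..} \<subseteq> {u. 0 \<le> u \<and> x < u * y}"
        proof safe
          fix u :: real assume u: "b < u"
          then show "0 \<le> u" using b by simp
          have "b * y < u * y" using u y by (simp add: mult_strict_right_mono)
          then show "x < u * y" using True by linarith
        qed
        show "{u. 0 \<le> u \<and> x < u * y} \<in> sets F" using Hset_borel by (simp add: setsF)
      qed
      then show ?thesis using True by simp
    qed simp
  qed
  finally show ?thesis .
qed

lemma SS_le_int:
  assumes x: "0 < x"
  shows "SS x \<le> (\<integral>\<^sup>+y1. \<integral>\<^sup>+y2. (Pf x y1 + Pf x y2 + (ennreal C * Hf F x y1) * indicator {L<..} y2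
      + (ennreal C * Hf F x y2) * indicator {L<..} y1) \<partial>G \<partial>G)"
  unfolding SS_def
proof (intro nn_integral_mono_AE)
  show "AE y1 in G. (\<integral>\<^sup>+y2. emeasure (F \<Otimes>\<^sub>M F) (Sset x y1 y2) \<partial>G) \<le> (\<integral>\<^sup>+y2. (Pf x y1 + Pf x y2 + (ennreal C * Hf F x y1) * indicator {L<..} y2
      + (ennreal C * Hf F x y2) * indicator {L<..} y1) \<partial>G)"
    using Gnn
  proof eventually_elim
    fix y1 :: real assume y1: "0 \<le> y1"
    show "(\<integral>\<^sup>+y2. emeasure (F \<Otimes>\<^sub>M F) (Sset x y1 y2) \<partial>G) \<le> (\<integral>\<^sup>+y2. (Pf x y1 + Pf x y2 + (ennreal C * Hf F x y1) * indicator {L<..} y2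
      + (ennreal C * Hf F x y2) * indicator {L<..} y1) \<partial>G)"
      using Gnn by (intro nn_integral_mono_AE) (auto elim!: eventually_mono intro!: S_point y1 x)
  qed
qed

lemma int_Pf: "integral\<^sup>N G (Pf x) = HT (x - h) + 2 * (ennreal e * HT x)
   + emeasure F {u. 0 \<le> u \<and> x < 2 * L * u} * emeasure G {Ls<..} + emeasure F {s<..} * emeasure G {y. x < 2 * s0 * y}"
proof -
  have Ss: "{y. x < 2 * s0 * y} \<in> sets G"
  proof -
    have "{y \<in> space G. x < 2 * s0 * y} \<in> sets G" by measurable
    then show ?thesis by (simp add: sG)
  qed
  have [measurable]: "(\<lambda>y. Hf F c y) \<in> borel_measurable G" for c by (rule Hf_meas[OF probF setsF setsG])
  show ?thesis unfolding Pf_def HT_def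
    by (simp add: nn_integral_add nn_integral_cmult nn_integral_cmult_indicator Ss setsG)
qed


lemma SS_bound:
  assumes x: "0 < x"
  shows "SS x \<le> 2 * HT (x - h) + 10 * (ennreal e * HT x)"
proof -
  have [measurable]: "(\<lambda>y. Hf F c y) \<in> borel_measurable G" for c by (rule Hf_meas[OF probF setsF setsG])
  have Qm: "(\<lambda>y. ennreal C * Hf F x y) \<in> borel_measurable G" by measurable
  have Im: "indicator {L<..} \<in> borel_measurable G" by (simp add: setsG)
  define A where "A = emeasure F {u. 0 \<le> u \<and> x < 2 * L * u}"
  define E where "E = ennreal e * HT x"
  define B1 where "B1 = A * emeasure G {Ls<..}"
  define B2 where "B2 = emeasure F {s<..} * emeasure G {y. x < 2 * s0 * y}"
  define B3 where "B3 = ennreal C * HT x * emeasure G {L<..}"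
  have "SS x \<le> 2 * integral\<^sup>N G (Pf x) + 2 * (integral\<^sup>N G (\<lambda>y. ennreal C * Hf F x y) * integral\<^sup>N G (indicator {L<..}))"
    using SS_le_int[OF x] int2[OF probG Pf_meas Qm Im] by simp
  also have "integral\<^sup>N G (\<lambda>y. ennreal C * Hf F x y) = ennreal C * HT x"
    unfolding HT_def by (simp add: nn_integral_cmult)
  also have "integral\<^sup>N G (indicator {L<..}) = emeasure G {L<..}"
    by (simp add: setsG)
  also have "integral\<^sup>N G (Pf x) = HT (x - h) + 2 * E + B1 + B2"
    by (simp add: int_Pf A_def E_def B1_def B2_def)
  finally have main: "SS x \<le> 2 * (HT (x - h) + 2 * E + B1 + B2) + 2 * B3" by (simp add: B3_def)
  have k1: "B1 \<le> E"
  proof -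
    have "A * emeasure G {Ls<..} \<le> A * (ennreal e * emeasure G {2 * L<..})" by (intro mult_left_mono qLs) auto
    also have "\<dots> = ennreal e * (emeasure G {2 * L<..} * A)" by (simp add: ac_simps)
    also have "\<dots> \<le> ennreal e * HT x" unfolding A_def using par by (intro mult_left_mono LB1) auto
    finally show ?thesis by (simp add: E_def B1_def)
  qed
  have k2: "B2 \<le> E"
  proof -
    have "emeasure F {s<..} * emeasure G {y. x < 2 * s0 * y} \<le> (ennreal e * emeasure F {2 * s0<..}) * emeasure G {y. x < 2 * s0 * y}"
      by (intro mult_right_mono FTs) auto
    also have "\<dots> = ennreal e * (emeasure G {y. x < 2 * s0 * y} * emeasure F {2 * s0<..})" by (simp add: ac_simps)
    also have "\<dots> \<le> ennreal e * HT x" using par x by (intro mult_left_mono LB2) auto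
    finally show ?thesis by (simp add: E_def B2_def)
  qed
  have k3: "B3 \<le> E"
  proof -
    have "ennreal C * HT x * emeasure G {L<..} = HT x * (ennreal C * emeasure G {L<..})" by (simp add: ac_simps)
    also have "\<dots> \<le> HT x * ennreal e" by (intro mult_left_mono qL) auto
    finally show ?thesis by (simp add: E_def B3_def ac_simps)
  qed
  have "2 * (HT (x - h) + 2 * E + B1 + B2) + 2 * B3 \<le> 2 * (HT (x - h) + 2 * E + E + E) + 2 * E"
    by (intro add_mono mult_left_mono k1 k2 k3 order_refl) auto
  also have "2 * (HT (x - h) + 2 * E + E + E) + 2 * E = 2 * HT (x - h) + 10 * E"
  proof -
    have "(10::ennreal) = 2*2 + 2 + 2 + 2" by simp
    then show ?thesis by (simp only: distrib_left distrib_right mult.assoc add.assoc)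
  qed
  finally have "2 * (HT (x - h) + 2 * E + B1 + B2) + 2 * B3 \<le> 2 * HT (x - h) + 10 * E" .
  from order_trans[OF main this] show ?thesis unfolding E_def .
qed


lemma SS_bound':
  assumes x: "0 < x"
  shows "(\<integral>\<^sup>+y1. \<integral>\<^sup>+y2. emeasure (F \<Otimes>\<^sub>M F) (Sset x y1 y2) \<partial>G \<partial>G)
    \<le> 2 * (\<integral>\<^sup>+y. Hf F (x - h) y \<partial>G) + 10 * (ennreal e * (\<integral>\<^sup>+y. Hf F x y \<partial>G))"
  using SS_bound[OF x] unfolding SS_def HT_def .

end

context
  fixes F G :: "real measure"
  assumes probF: "prob_space F" and setsF[measurable_cong]: "sets F = sets borel"
    and probG: "prob_space G" and setsG[measurable_cong]: "sets G = sets borel"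
    and FnnAE: "AE x in F. 0 \<le> x"
begin

interpretation F: prob_space F by (rule probF)
interpretation G: prob_space G by (rule probG)
interpretation FG: pair_sigma_finite F G ..
interpretation FF: pair_sigma_finite F F ..

lemma H0_prob: "prob_space (distr (F \<Otimes>\<^sub>M G) borel (\<lambda>p. fst p * snd p))"
proof -
  interpret P: prob_space "F \<Otimes>\<^sub>M G" by (simp add: prob_space_pair probF probG)
  show ?thesis by (intro P.prob_space_distr) measurable
qed

lemma H0_tail: "emeasure (distr (F \<Otimes>\<^sub>M G) borel (\<lambda>p. fst p * snd p)) {c<..} = (\<integral>\<^sup>+y. Hf F c y \<partial>G)"
proof -
  have "emeasure (distr (F \<Otimes>\<^sub>M G) borel (\<lambda>p. fst p * snd p)) {c<..}
     = emeasure (F \<Otimes>\<^sub>M G) ((\<lambda>p. fst p * snd p) -` {c<..} \<inter> space (F \<Otimes>\<^sub>M G))"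
    by (intro emeasure_distr) auto
  also have "\<dots> = (\<integral>\<^sup>+y. emeasure F ((\<lambda>x. (x, y)) -` ((\<lambda>p. fst p * snd p) -` {c<..} \<inter> space (F \<Otimes>\<^sub>M G))) \<partial>G)"
    by (intro FG.emeasure_pair_measure_alt2) measurable
  also have "\<dots> = (\<integral>\<^sup>+y. Hf F c y \<partial>G)"
  proof (intro nn_integral_cong)
    fix y
    have "emeasure F ((\<lambda>x. (x, y)) -` ((\<lambda>p. fst p * snd p) -` {c<..} \<inter> space (F \<Otimes>\<^sub>M G))) = emeasure F {u. 0 \<le> u \<and> c < u * y}"
    proof (intro emeasure_eq_AE)
      show "AE x in F. (x \<in> (\<lambda>x. (x, y)) -` ((\<lambda>p. fst p * snd p) -` {c<..} \<inter> space (F \<Otimes>\<^sub>M G))) = (x \<in> {u. 0 \<le> u \<and> c < u * y})"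
        using FnnAE by eventually_elim (auto simp: space_pair_measure spaceF[OF probF setsF] sets_eq_imp_space_eq[OF setsG])
      have "{x \<in> space F. c < x * y} \<in> sets F" by measurable
      then show "(\<lambda>x. (x, y)) -` ((\<lambda>p. fst p * snd p) -` {c<..} \<inter> space (F \<Otimes>\<^sub>M G)) \<in> sets F"
        by (simp add: space_pair_measure spaceF[OF probF setsF] sets_eq_imp_space_eq[OF setsG] vimage_def)
      have "{x \<in> space F. 0 \<le> x \<and> c < x * y} \<in> sets F" by measurable
      then show "{u. 0 \<le> u \<and> c < u * y} \<in> sets F" by (simp add: spaceF[OF probF setsF])
    qed
    then show "emeasure F ((\<lambda>x. (x, y)) -` ((\<lambda>p. fst p * snd p) -` {c<..} \<inter> space (F \<Otimes>\<^sub>M G))) = Hf F c y"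
      by (simp add: Hf_def)
  qed
  finally show ?thesis .
qed

lemma H0_int:
  assumes f[measurable]: "f \<in> borel_measurable borel"
  shows "(\<integral>\<^sup>+a. f a \<partial>distr (F \<Otimes>\<^sub>M G) borel (\<lambda>p. fst p * snd p)) = (\<integral>\<^sup>+y. \<integral>\<^sup>+u. f (u * y) \<partial>F \<partial>G)"
proof -
  have "(\<integral>\<^sup>+a. f a \<partial>distr (F \<Otimes>\<^sub>M G) borel (\<lambda>p. fst p * snd p)) = (\<integral>\<^sup>+p. f (fst p * snd p) \<partial>(F \<Otimes>\<^sub>M G))"
    by (intro nn_integral_distr) auto
  also have "\<dots> = (\<integral>\<^sup>+y. \<integral>\<^sup>+u. f (u * y) \<partial>F \<partial>G)"
    by (subst FG.nn_integral_snd[symmetric]) auto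
  finally show ?thesis .
qed

lemma FF_nn: "AE p in F \<Otimes>\<^sub>M F. 0 \<le> fst p \<and> 0 \<le> snd p"
proof -
  have "AE x in F. AE y in F. 0 \<le> x \<and> 0 \<le> y"
    using FnnAE by eventually_elim (use FnnAE in auto)
  moreover have "{p \<in> space (F \<Otimes>\<^sub>M F). 0 \<le> fst p \<and> 0 \<le> snd p} \<in> sets (F \<Otimes>\<^sub>M F)" by measurable
  ultimately show ?thesis using FF.AE_pair_iff[of "\<lambda>x y. 0 \<le> x \<and> 0 \<le> y"] by simp
qed

lemma FF_Sset: "emeasure (F \<Otimes>\<^sub>M F) {p. x < fst p * y1 + snd p * y2} = emeasure (F \<Otimes>\<^sub>M F) (Sset x y1 y2)"
proof (intro emeasure_eq_AE)
  show "AE p in F \<Otimes>\<^sub>M F. (p \<in> {p. x < fst p * y1 + snd p * y2}) = (p \<in> Sset x y1 y2)"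
    using FF_nn by eventually_elim (auto simp: Sset_def)
  have "{p \<in> space (F \<Otimes>\<^sub>M F). x < fst p * y1 + snd p * y2} \<in> sets (F \<Otimes>\<^sub>M F)" by measurable
  then show "{p. x < fst p * y1 + snd p * y2} \<in> sets (F \<Otimes>\<^sub>M F)" by (simp add: spaceFF[OF probF setsF])
  have "{p \<in> space (F \<Otimes>\<^sub>M F). 0 \<le> fst p \<and> 0 \<le> snd p \<and> x < fst p * y1 + snd p * y2} \<in> sets (F \<Otimes>\<^sub>M F)" by measurable
  then show "Sset x y1 y2 \<in> sets (F \<Otimes>\<^sub>M F)" by (simp add: spaceFF[OF probF setsF] Sset_def)
qed

lemma H0_conv: "emeasure (distr (F \<Otimes>\<^sub>M G) borel (\<lambda>p. fst p * snd p) \<star> distr (F \<Otimes>\<^sub>M G) borel (\<lambda>p. fst p * snd p)) {x<..}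
   = (\<integral>\<^sup>+y1. \<integral>\<^sup>+y2. emeasure (F \<Otimes>\<^sub>M F) (Sset x y1 y2) \<partial>G \<partial>G)"
proof -
  define H0 where "H0 = distr (F \<Otimes>\<^sub>M G) borel (\<lambda>p. fst p * snd p)"
  have finH: "finite_measure H0" using H0_prob by (simp add: H0_def prob_space_def)
  have sH: "sets H0 = sets borel" by (simp add: H0_def)
  define K where "K a = (\<integral>\<^sup>+y2. \<integral>\<^sup>+u2. indicator {x<..} (a + u2 * y2) \<partial>F \<partial>G)" for a
  have Km[measurable]: "K \<in> borel_measurable borel" unfolding K_def by measurable
  have "emeasure (H0 \<star> H0) {x<..} = (\<integral>\<^sup>+a. \<integral>\<^sup>+b. indicator {x<..} (a + b) \<partial>H0 \<partial>H0)"
    by (intro convolution_emeasure' finH sH) auto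
  also have "\<dots> = (\<integral>\<^sup>+a. K a \<partial>H0)"
    unfolding K_def H0_def by (intro nn_integral_cong H0_int) measurable
  also have "\<dots> = (\<integral>\<^sup>+y1. \<integral>\<^sup>+u1. K (u1 * y1) \<partial>F \<partial>G)"
    unfolding H0_def by (rule H0_int[OF Km])
  also have "\<dots> = (\<integral>\<^sup>+y1. \<integral>\<^sup>+y2. emeasure (F \<Otimes>\<^sub>M F) (Sset x y1 y2) \<partial>G \<partial>G)"
  proof (intro nn_integral_cong)
    fix y1
    have "(\<integral>\<^sup>+u1. K (u1 * y1) \<partial>F) = (\<integral>\<^sup>+u1. \<integral>\<^sup>+y2. (\<integral>\<^sup>+u2. indicator {x<..} (u1 * y1 + u2 * y2) \<partial>F) \<partial>G \<partial>F)"
      by (simp add: K_def)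
    also have "\<dots> = (\<integral>\<^sup>+y2. \<integral>\<^sup>+u1. (\<integral>\<^sup>+u2. indicator {x<..} (u1 * y1 + u2 * y2) \<partial>F) \<partial>F \<partial>G)"
      by (rule FG.Fubini'[symmetric]) measurable
    also have "\<dots> = (\<integral>\<^sup>+y2. emeasure (F \<Otimes>\<^sub>M F) (Sset x y1 y2) \<partial>G)"
    proof (intro nn_integral_cong)
      fix y2
      have "emeasure (F \<Otimes>\<^sub>M F) {p. x < fst p * y1 + snd p * y2}
         = (\<integral>\<^sup>+u1. \<integral>\<^sup>+u2. indicator {p. x < fst p * y1 + snd p * y2} (u1, u2) \<partial>F \<partial>F)"
      proof (rule F.emeasure_pair_measure)
        have "{p \<in> space (F \<Otimes>\<^sub>M F). x < fst p * y1 + snd p * y2} \<in> sets (F \<Otimes>\<^sub>M F)" by measurable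
        then show "{p. x < fst p * y1 + snd p * y2} \<in> sets (F \<Otimes>\<^sub>M F)" by (simp add: spaceFF[OF probF setsF])
      qed
      also have "\<dots> = (\<integral>\<^sup>+u1. \<integral>\<^sup>+u2. indicator {x<..} (u1 * y1 + u2 * y2) \<partial>F \<partial>F)"
        by (simp add: indicator_def)
      finally show "(\<integral>\<^sup>+u1. (\<integral>\<^sup>+u2. indicator {x<..} (u1 * y1 + u2 * y2) \<partial>F) \<partial>F) = emeasure (F \<Otimes>\<^sub>M F) (Sset x y1 y2)"
        using FF_Sset by simp
    qed
    finally show "(\<integral>\<^sup>+u1. K (u1 * y1) \<partial>F) = (\<integral>\<^sup>+y2. emeasure (F \<Otimes>\<^sub>M F) (Sset x y1 y2) \<partial>G)" .
  qed
  finally show ?thesis by (simp add: H0_def)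
qed

end

lemma tail_eq:
  fixes V :: "real measure"
  assumes "prob_space V" "sets V = sets borel"
  shows "tail V x = measure V {x<..}"
proof -
  interpret V: prob_space V by fact
  have "measure V {x<..} = measure V (space V - {..x})"
    using sets_eq_imp_space_eq[OF assms(2)] by (simp add: Compl_eq_Diff_UNIV[symmetric])
  also have "\<dots> = 1 - measure V {..x}"
    by (rule V.prob_compl) (simp add: assms(2))
  finally show ?thesis by (simp add: tail_def)
qed

lemma tail_lim:
  fixes V :: "real measure"
  assumes "prob_space V" "sets V = sets borel"
  shows "((\<lambda>t. measure V {t<..}) \<longlongrightarrow> 0) at_top"
proof -
  interpret V: real_distribution V using assms by (simp add: real_distribution_def real_distribution_axioms_def)
  have "((\<lambda>t. 1 - cdf V t) \<longlongrightarrow> 1 - 1) at_top"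
    by (intro tendsto_intros V.cdf_lim_at_top_prob)
  then show ?thesis using tail_eq[OF assms] by (simp add: tail_def cdf_def)
qed

lemma params:
  fixes F G :: "real measure" and e :: real
  assumes probF: "prob_space F" and setsF[measurable_cong]: "sets F = sets borel"
    and Fnn: "measure F {..<0} = 0"
    and Fpos: "\<And>t. 0 < measure F {t<..}"
    and Fsub: "(\<lambda>t. measure (F \<Otimes>\<^sub>M F) {p. t < fst p + snd p}) \<sim>[at_top] (\<lambda>t. 2 * measure F {t<..})"
    and probG: "prob_space G" and setsG[measurable_cong]: "sets G = sets borel"
    and Gnn: "AE y in G. 0 \<le> y"
    and e: "0 < e"
  shows "\<exists>h>0. \<forall>x>0. (\<integral>\<^sup>+y1. \<integral>\<^sup>+y2. emeasure (F \<Otimes>\<^sub>M F) (Sset x y1 y2) \<partial>G \<partial>G)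
    \<le> 2 * (\<integral>\<^sup>+y. Hf F (x - h) y \<partial>G) + 10 * (ennreal e * (\<integral>\<^sup>+y. Hf F x y \<partial>G))"
proof -
  interpret F: prob_space F by (rule probF)
  interpret G: prob_space G by (rule probG)
  obtain s0 where s0: "s0 > 0" "\<And>s t. s \<ge> s0 \<Longrightarrow> measure (F \<Otimes>\<^sub>M F) (Phi t s) \<le> e * measure F {t<..}"
    using F1[OF probF setsF Fnn Fpos Fsub e] by blast
  obtain C where C: "C > 0" "\<And>t. measure (F \<Otimes>\<^sub>M F) {p. t < fst p + snd p} \<le> C * measure F {t<..}"
    using C0[OF probF setsF Fnn Fpos Fsub] by blast
  have Glim: "((\<lambda>t. measure G {t<..}) \<longlongrightarrow> 0) at_top" by (rule tail_lim[OF probG setsG])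
  have Flim: "((\<lambda>t. measure F {t<..}) \<longlongrightarrow> 0) at_top" by (rule tail_lim[OF probF setsF])
  have "eventually (\<lambda>t. measure G {t<..} < e / C) at_top"
    using order_tendstoD(2)[OF Glim, of "e / C"] e C by simp
  then obtain L0 where L0: "\<And>t. t \<ge> L0 \<Longrightarrow> measure G {t<..} < e / C"
    by (auto simp: eventually_at_top_linorder)
  define L where "L = max L0 1"
  have L: "0 < L" "measure G {L<..} < e / C" using L0[of L] by (auto simp: L_def)
  have qL: "ennreal C * emeasure G {L<..} \<le> ennreal e"
  proof -
    have "C * measure G {L<..} \<le> e" using L C by (simp add: field_simps)
    then show ?thesis using C by (simp add: G.emeasure_eq_measure ennreal_mult[symmetric] ennreal_leI)
  qed
  obtain Ls where Ls: "L \<le> Ls" "measure G {Ls<..} \<le> e * measure G {2 * L<..}"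
  proof (cases "measure G {2 * L<..} = 0")
    case True
    show ?thesis using L True by (intro that[of "2 * L"]) auto
  next
    case False
    then have pos: "measure G {2 * L<..} > 0" using measure_nonneg[of G "{2 * L<..}"] by linarith
    have "eventually (\<lambda>t. measure G {t<..} < e * measure G {2 * L<..}) at_top"
      using order_tendstoD(2)[OF Glim, of "e * measure G {2 * L<..}"] e pos by simp
    then obtain t1 where t1: "\<And>t. t \<ge> t1 \<Longrightarrow> measure G {t<..} < e * measure G {2 * L<..}"
      by (auto simp: eventually_at_top_linorder)
    show ?thesis using t1[of "max t1 L"] by (intro that[of "max t1 L"]) auto
  qed
  have qLs: "emeasure G {Ls<..} \<le> ennreal e * emeasure G {2 * L<..}"
    using Ls e by (simp add: G.emeasure_eq_measure ennreal_mult[symmetric] ennreal_leI)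
  have pos2: "measure F {2 * s0<..} > 0" by (rule Fpos)
  have "eventually (\<lambda>t. measure F {t<..} < e * measure F {2 * s0<..}) at_top"
    using order_tendstoD(2)[OF Flim, of "e * measure F {2 * s0<..}"] e pos2 by simp
  then obtain t2 where t2: "\<And>t. t \<ge> t2 \<Longrightarrow> measure F {t<..} < e * measure F {2 * s0<..}"
    by (auto simp: eventually_at_top_linorder)
  define s where "s = max t2 s0"
  have s: "s0 \<le> s" "measure F {s<..} \<le> e * measure F {2 * s0<..}" using t2[of s] by (auto simp: s_def)
  have FTs: "emeasure F {s<..} \<le> ennreal e * emeasure F {2 * s0<..}"
    using s e by (simp add: F.emeasure_eq_measure ennreal_mult[symmetric] ennreal_leI)
  define h where "h = max (s * L) (s0 * Ls)"
  have hpos: "0 < h" using s0 L Ls by (simp add: h_def less_max_iff_disj)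
  have par: "0 < e" "0 < C" "0 < L" "L \<le> Ls" "0 < s0" "s0 \<le> s" "0 < h" "s * L \<le> h" "s0 * Ls \<le> h"
    using e C L Ls s0 s hpos by (auto simp: h_def)
  show ?thesis
    using SS_bound'[OF probF setsF probG setsG Gnn par s0(2)[OF order_refl] C(2) qL qLs FTs] hpos by blast
qed


lemma lower_conv:
  fixes H :: "real measure"
  assumes probH: "prob_space H" and setsH[measurable_cong]: "sets H = sets borel"
    and Hnn: "AE a in H. 0 \<le> a" and x: "0 \<le> x"
  shows "2 * measure H {x<..} - (measure H {x<..})^2 \<le> measure (H \<star> H) {x<..}"
proof -
  interpret H: prob_space H by (rule probH)
  interpret HH: prob_space "H \<Otimes>\<^sub>M H" by (simp add: prob_space_pair probH)
  have sH: "space H = UNIV" using sets_eq_imp_space_eq[OF setsH] by simp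
  have conv: "measure (H \<star> H) {x<..} = measure (H \<Otimes>\<^sub>M H) {p. x < fst p + snd p}"
  proof -
    have "measure (H \<star> H) {x<..} = measure (H \<Otimes>\<^sub>M H) ((\<lambda>(a, b). a + b) -` {x<..} \<inter> space (H \<Otimes>\<^sub>M H))"
      unfolding convolution_def by (intro measure_distr) auto
    also have "(\<lambda>(a, b). a + b) -` {x<..} \<inter> space (H \<Otimes>\<^sub>M H) = {p. x < fst p + snd p}"
      by (auto simp: space_pair_measure sH)
    finally show ?thesis .
  qed
  have H0: "measure H {0..} = 1"
  proof -
    have "measure H {0..} = measure H UNIV"
      by (rule measure_eq_AE) (use Hnn in \<open>auto simp: setsH\<close>)
    then show ?thesis using H.prob_space sH by simp
  qed
  define U where "U = {x<..} \<times> ({0..} :: real set)"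
  define V where "V = ({0..} :: real set) \<times> {x<..}"
  have Us: "U \<in> sets (H \<Otimes>\<^sub>M H)" by (simp add: U_def setsH)
  have Vs: "V \<in> sets (H \<Otimes>\<^sub>M H)" by (simp add: V_def setsH)
  have mU: "measure (H \<Otimes>\<^sub>M H) U = measure H {x<..}"
    unfolding U_def by (simp add: measure_times[OF probH setsH] H0)
  have mV: "measure (H \<Otimes>\<^sub>M H) V = measure H {x<..}"
    unfolding V_def by (simp add: measure_times[OF probH setsH] H0)
  have UV: "U \<inter> V = {x<..} \<times> {x<..}" using x by (auto simp: U_def V_def)
  have mUV: "measure (H \<Otimes>\<^sub>M H) (U \<inter> V) = (measure H {x<..})^2"
    unfolding UV by (simp add: measure_times[OF probH setsH] power2_eq_square)
  have "measure (H \<Otimes>\<^sub>M H) (U \<union> V) = measure (H \<Otimes>\<^sub>M H) U + measure (H \<Otimes>\<^sub>M H) V - measure (H \<Otimes>\<^sub>M H) (U \<inter> V)"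
    using Us Vs by (intro measure_Un3) (auto simp: HH.fmeasurable_eq_sets)
  also have "\<dots> = 2 * measure H {x<..} - (measure H {x<..})^2" using mU mV mUV by simp
  finally have eq: "measure (H \<Otimes>\<^sub>M H) (U \<union> V) = 2 * measure H {x<..} - (measure H {x<..})^2" .
  have "measure (H \<Otimes>\<^sub>M H) (U \<union> V) \<le> measure (H \<Otimes>\<^sub>M H) {p. x < fst p + snd p}"
  proof (intro HH.finite_measure_mono)
    show "U \<union> V \<subseteq> {p. x < fst p + snd p}" by (auto simp: U_def V_def)
    have "{p \<in> space (H \<Otimes>\<^sub>M H). x < fst p + snd p} \<in> sets (H \<Otimes>\<^sub>M H)" by measurable
    then show "{p. x < fst p + snd p} \<in> sets (H \<Otimes>\<^sub>M H)" by (simp add: space_pair_measure sH)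
  qed
  then show ?thesis using eq conv by simp
qed

theorem mainTheorem2:
  fixes M :: "'a measure" and X Y :: "'a \<Rightarrow> real"
  assumes "prob_space M"
    and "X \<in> borel_measurable M" and "Y \<in> borel_measurable M"
    and "prob_space.indep_var M borel X borel Y"
    and "AE \<omega> in M. X \<omega> \<ge> 0" and "AE \<omega> in M. Y \<omega> \<ge> 0"
    and "distr M borel Y \<noteq> return borel 0"
    and "subexponential (distr M borel X)"
    and "long_tailed (distr M borel (\<lambda>\<omega>. X \<omega> * Y \<omega>))"
  shows "subexponential (distr M borel (\<lambda>\<omega>. X \<omega> * Y \<omega>))"
proof -
  interpret M: prob_space M by (rule assms(1))
  note [measurable] = assms(2) assms(3)
  define F where "F = distr M borel X"
  define G where "G = distr M borel Y"
  define H where "H = distr M borel (\<lambda>\<omega>. X \<omega> * Y \<omega>)"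
  have probF: "prob_space F" unfolding F_def by (intro M.prob_space_distr) measurable
  have setsF[measurable_cong]: "sets F = sets borel" by (simp add: F_def)
  have probG: "prob_space G" unfolding G_def by (intro M.prob_space_distr) measurable
  have setsG[measurable_cong]: "sets G = sets borel" by (simp add: G_def)
  have probH: "prob_space H" unfolding H_def by (intro M.prob_space_distr) measurable
  have setsH[measurable_cong]: "sets H = sets borel" by (simp add: H_def)
  interpret F: prob_space F by (rule probF)
  interpret G: prob_space G by (rule probG)
  interpret H: prob_space H by (rule probH)
  have FnnAE: "AE x in F. 0 \<le> x" unfolding F_def using assms(5) by (subst AE_distr_iff) auto
  have GnnAE: "AE x in G. 0 \<le> x" unfolding G_def using assms(6) by (subst AE_distr_iff) auto
  have HnnAE: "AE x in H. 0 \<le> x" unfolding H_def using assms(5,6) by (subst AE_distr_iff) auto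
  have Fnn: "measure F {..<0} = 0"
  proof -
    have "measure F {..<0} = measure F {}"
      by (rule measure_eq_AE) (use FnnAE in \<open>auto simp: setsF\<close>)
    then show ?thesis by simp
  qed
  have Hnn: "measure H {..<0} = 0"
  proof -
    have "measure H {..<0} = measure H {}"
      by (rule measure_eq_AE) (use HnnAE in \<open>auto simp: setsH\<close>)
    then show ?thesis by simp
  qed
  have subF: "(\<lambda>x. tail (F \<star> F) x) \<sim>[at_top] (\<lambda>x. 2 * tail F x)" "\<And>x. tail F x > 0"
    using assms(8) by (auto simp: subexponential_def F_def)
  have Fpos: "\<And>t. 0 < measure F {t<..}" using subF(2) tail_eq[OF probF setsF] by simp
  have convF: "tail (F \<star> F) t = measure (F \<Otimes>\<^sub>M F) {p. t < fst p + snd p}" for t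
  proof -
    interpret FF: prob_space "F \<Otimes>\<^sub>M F" by (simp add: prob_space_pair probF)
    have pc: "prob_space (F \<star> F)" unfolding convolution_def by (intro FF.prob_space_distr) measurable
    have "tail (F \<star> F) t = measure (F \<star> F) {t<..}" by (rule tail_eq[OF pc]) simp
    also have "\<dots> = measure (F \<Otimes>\<^sub>M F) ((\<lambda>(a, b). a + b) -` {t<..} \<inter> space (F \<Otimes>\<^sub>M F))"
      unfolding convolution_def by (intro measure_distr) auto
    also have "(\<lambda>(a, b). a + b) -` {t<..} \<inter> space (F \<Otimes>\<^sub>M F) = {p. t < fst p + snd p}"
      by (auto simp: space_pair_measure spaceF[OF probF setsF])
    finally show ?thesis .
  qed
  have Fsub: "(\<lambda>t. measure (F \<Otimes>\<^sub>M F) {p. t < fst p + snd p}) \<sim>[at_top] (\<lambda>t. 2 * measure F {t<..})"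
    using subF(1) by (simp add: convF tail_eq[OF probF setsF])
  have joint: "F \<Otimes>\<^sub>M G = distr M (borel \<Otimes>\<^sub>M borel) (\<lambda>\<omega>. (X \<omega>, Y \<omega>))"
    using assms(4) M.indep_var_distribution_eq[of borel X borel Y] by (simp add: F_def G_def)
  have HFG: "H = distr (F \<Otimes>\<^sub>M G) borel (\<lambda>p. fst p * snd p)"
    unfolding joint H_def by (subst distr_distr) (auto simp: comp_def)
  define ht where "ht x = measure H {x<..}" for x
  define st where "st x = measure (H \<star> H) {x<..}" for x
  have HT: "(\<integral>\<^sup>+y. Hf F c y \<partial>G) = ennreal (ht c)" for c
    using H0_tail[OF probF setsF probG setsG FnnAE, of c] HFG[symmetric]
    by (simp add: ht_def H.emeasure_eq_measure)
  have probHH: "prob_space (H \<star> H)"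
  proof -
    interpret HH: prob_space "H \<Otimes>\<^sub>M H" by (simp add: prob_space_pair probH)
    show ?thesis unfolding convolution_def by (intro HH.prob_space_distr) measurable
  qed
  interpret HH2: prob_space "H \<star> H" by (rule probHH)
  have SS: "(\<integral>\<^sup>+y1. \<integral>\<^sup>+y2. emeasure (F \<Otimes>\<^sub>M F) (Sset x y1 y2) \<partial>G \<partial>G) = ennreal (st x)" for x
    using H0_conv[OF probF setsF probG setsG FnnAE, of x] HFG[symmetric]
    by (simp add: st_def HH2.emeasure_eq_measure)
  have LH: "real_distribution H" "\<And>x. tail H x > 0" "\<And>t. (\<lambda>x. tail H (x - t)) \<sim>[at_top] (\<lambda>x. tail H x)"
    using assms(9) by (auto simp: long_tailed_def H_def)
  have tH: "tail H x = ht x" for x by (simp add: ht_def tail_eq[OF probH setsH])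
  have tHH: "tail (H \<star> H) x = st x" for x by (simp add: st_def tail_eq[OF probHH])
  have htpos: "\<And>x. ht x > 0" using LH(2) tH by simp
  have htlim: "(ht \<longlongrightarrow> 0) at_top" unfolding ht_def by (rule tail_lim[OF probH setsH])
  have lower: "\<And>x. 0 \<le> x \<Longrightarrow> 2 * ht x - (ht x)^2 \<le> st x"
    unfolding ht_def st_def by (rule lower_conv[OF probH setsH HnnAE])
  have upper: "\<exists>h>0. \<forall>x>0. st x \<le> 2 * ht (x - h) + 10 * (e * ht x)" if e: "0 < e" for e
  proof -
    obtain h where h: "h > 0" "\<And>x. x > 0 \<Longrightarrow> (\<integral>\<^sup>+y1. \<integral>\<^sup>+y2. emeasure (F \<Otimes>\<^sub>M F) (Sset x y1 y2) \<partial>G \<partial>G)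
    \<le> 2 * (\<integral>\<^sup>+y. Hf F (x - h) y \<partial>G) + 10 * (ennreal e * (\<integral>\<^sup>+y. Hf F x y \<partial>G))"
      using params[OF probF setsF Fnn Fpos Fsub probG setsG GnnAE e] by blast
    have "st x \<le> 2 * ht (x - h) + 10 * (e * ht x)" if x: "x > 0" for x
    proof -
      have "ennreal (st x) \<le> 2 * ennreal (ht (x - h)) + 10 * (ennreal e * ennreal (ht x))"
        using h(2)[OF x] by (simp add: SS HT)
      also have "\<dots> = ennreal (2 * ht (x - h) + 10 * (e * ht x))"
        using e htpos[of x] htpos[of "x - h"]
        by (simp add: ennreal_plus ennreal_mult' ennreal_mult)
      finally show ?thesis using e htpos[of x] htpos[of "x - h"] by (subst (asm) ennreal_le_iff) auto
    qed
    then show ?thesis using h(1) by blast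
  qed
  have ratio: "((\<lambda>x. st x / (2 * ht x)) \<longlongrightarrow> 1) at_top"
  proof (rule tendstoI)
    fix r :: real assume r: "r > 0"
    define e where "e = r / 12"
    have e: "e > 0" using r by (simp add: e_def)
    obtain h where h: "h > 0" "\<And>x. x > 0 \<Longrightarrow> st x \<le> 2 * ht (x - h) + 10 * (e * ht x)"
      using upper[OF e] by blast
    have ev1: "eventually (\<lambda>x. ht (x - h) \<le> (1 + e) * ht x) at_top"
    proof -
      have "eventually (\<lambda>x. norm (tail H (x - h)) \<le> (1 + e) * norm (tail H x)) at_top"
        using asymp_equiv_imp_eventually_le[OF LH(3)[of h], of "1 + e"] e by simp
      then show ?thesis
      proof eventually_elim
        case (elim x)
        then show ?case using htpos[of x] htpos[of "x - h"] by (simp add: tH)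
      qed
    qed
    have ev2: "eventually (\<lambda>x. ht x < r) at_top"
      using order_tendstoD(2)[OF htlim r] .
    have ev3: "eventually (\<lambda>x::real. 0 < x) at_top" by (rule eventually_gt_at_top)
    show "eventually (\<lambda>x. dist (st x / (2 * ht x)) 1 < r) at_top"
      using ev1 ev2 ev3
    proof eventually_elim
      case (elim x)
      have hx: "0 < ht x" by (rule htpos)
      have up: "st x \<le> (2 + 12 * e) * ht x"
        using h(2)[OF elim(3)] elim(1) hx e by (simp add: algebra_simps)
      have lo: "2 * ht x - (ht x)^2 \<le> st x" using lower elim(3) by simp
      have up': "st x / (2 * ht x) \<le> 1 + 6 * e"
        using up hx by (simp add: divide_le_eq algebra_simps)
      have lo': "1 - ht x / 2 \<le> st x / (2 * ht x)"
        using lo hx by (simp add: le_divide_eq algebra_simps power2_eq_square)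
      have "\<bar>st x / (2 * ht x) - 1\<bar> < r"
        using up' lo' elim(2) hx r by (simp add: e_def abs_less_iff)
      then show ?case by (simp add: dist_real_def)
    qed
  qed
  have asy: "(\<lambda>x. st x) \<sim>[at_top] (\<lambda>x. 2 * ht x)"
    by (rule asymp_equivI') (use ratio in simp)
  have Hpos: "\<forall>x. tail H x > 0" using LH(2) by simp
  have tHH': "tail (H \<star> H) = st" by (rule ext) (simp add: tHH)
  show ?thesis
    unfolding subexponential_def H_def[symmetric]
    using LH(1) Hnn Hpos asy by (simp add: real_distribution_def tH tHH')
qed


end
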